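(* Let $(x_n)_{n\in\mathbb{Z}^{\geq 0}}$ be a sequence of real numbers satisfying $x_{n+1} = x_n x_{n-1} - x_{n-2}$ for all $n\geq 2$. If there exists some $N\in\mathbb{Z}^{\geq0}$ such that $$2<|x_N|, \quad |x_N|<|x_{N+1}|, \quad |x_{N+1}|<|x_{N+2}|,$$ then $|x_n|>2$ for all $n\geq N$ and $|x_n|\to\infty$ as $n\to\infty$.
   Context: The initial values $x_0,x_1,x_2$ are arbitrary real numbers, and all subsequent terms are determined by the recursion. *)

theory Defs
  imports Complex_Main
begin

end

theory Submission
  imports Defs
begin

theorem lemma1:
  fixes x :: "nat \<Rightarrow> real" and N :: nat
  assumes rec: "\<And>n. n \<ge> 2 \<Longrightarrow> x (n + 1) = x n * x (n - 1) - x (n - 2)"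
    and h1: "2 < \<bar>x N\<bar>"
    and h2: "\<bar>x N\<bar> < \<bar>x (N + 1)\<bar>"
    and h3: "\<bar>x (N + 1)\<bar> < \<bar>x (N + 2)\<bar>"
  shows "(\<forall>n\<ge>N. \<bar>x n\<bar> > 2) \<and> filterlim (\<lambda>n. \<bar>x n\<bar>) at_top sequentially"
proof -
  define d where "d = \<bar>x (N + 2)\<bar> - \<bar>x (N + 1)\<bar>"
  have dpos: "d > 0" using h3 d_def by simp
  have Q: "2 < \<bar>x (N+k)\<bar> \<and> \<bar>x (N+k)\<bar> < \<bar>x (N+k+1)\<bar> \<and> \<bar>x (N+k+1)\<bar> < \<bar>x (N+k+2)\<bar>
     \<and> \<bar>x (N+k+2)\<bar> - \<bar>x (N+k+1)\<bar> \<ge> d \<and> \<bar>x (N+k+2)\<bar> \<ge> \<bar>x N\<bar> + real k * d" for k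
  proof (induction k)
    case 0
    then show ?case using h1 h2 h3 d_def by simp
  next
    case (Suc k)
    define a where "a = x (N+k)"
    define b where "b = x (N+k+1)"
    define c where "c = x (N+k+2)"
    have r: "x (N+k+3) = c * b - a"
      using rec[of "N+k+2"] unfolding a_def b_def c_def
      by (simp add: numeral_3_eq_3 add.assoc)
    have ih: "2 < \<bar>a\<bar>" "\<bar>a\<bar> < \<bar>b\<bar>" "\<bar>b\<bar> < \<bar>c\<bar>" "\<bar>c\<bar> - \<bar>b\<bar> \<ge> d"
       "\<bar>c\<bar> \<ge> \<bar>x N\<bar> + real k * d"
      using Suc.IH unfolding a_def b_def c_def by auto
    have "\<bar>c * b\<bar> \<ge> 2 * \<bar>c\<bar>" unfolding abs_mult
      using ih by (subst mult.commute, intro mult_right_mono) auto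
    hence "\<bar>x (N+k+3)\<bar> \<ge> 2 * \<bar>c\<bar> - \<bar>a\<bar>" using r by linarith
    hence n: "\<bar>x (N+k+3)\<bar> - \<bar>c\<bar> \<ge> d" using ih by linarith
    have e: "N + Suc k = N+k+1" "N + k + 1 + 1 = N+k+2" "N + k + 1 + 2 = N+k+3" by auto
    have g: "2 < \<bar>b\<bar> \<and> \<bar>b\<bar> < \<bar>c\<bar> \<and> \<bar>c\<bar> < \<bar>x (N+k+3)\<bar>
     \<and> \<bar>x (N+k+3)\<bar> - \<bar>c\<bar> \<ge> d \<and> \<bar>x (N+k+3)\<bar> \<ge> \<bar>x N\<bar> + real (Suc k) * d"
      using ih n dpos by (auto simp: algebra_simps)
    show ?case unfolding e using g unfolding b_def c_def .
  qed
  have part1: "\<forall>n\<ge>N. \<bar>x n\<bar> > 2"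
  proof (intro allI impI)
    fix n assume "n \<ge> N"
    then obtain k where "n = N + k" using le_Suc_ex by blast
    thus "\<bar>x n\<bar> > 2" using Q[of k] by simp
  qed
  have part2: "filterlim (\<lambda>n. \<bar>x n\<bar>) at_top sequentially"
  proof (subst filterlim_at_top, intro allI)
    fix Z :: real
    obtain k :: nat where k: "(Z - \<bar>x N\<bar>) / d \<le> real k" using real_arch_simple by blast
    have kz: "\<bar>x N\<bar> + real k * d \<ge> Z" using k dpos by (simp add: field_simps)
    show "\<forall>\<^sub>F n in sequentially. Z \<le> \<bar>x n\<bar>"
    proof (rule eventually_sequentiallyI[of "N+k+2"])
      fix n assume "N + k + 2 \<le> n"
      then obtain m where m: "n = N + m + 2" "m \<ge> k"
        by (metis add.commute add.left_commute le_Suc_ex le_add2 add_le_cancel_left nat_le_iff_add)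
      have "real k * d \<le> real m * d" using m dpos by (intro mult_right_mono) auto
      thus "Z \<le> \<bar>x n\<bar>" using Q[of m] kz m(1) by simp
    qed
  qed
  show ?thesis using part1 part2 by blast
qed

end
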